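(* Let $M_{pq}=(W,V_{pq})$ be the inquisitive model with $W=\{w_1,w_2,w_3\}$, $V_{pq}(w_1)=\{p\}$, $V_{pq}(w_2)=\{q\}$, $V_{pq}(w_3)=\emptyset$, where $p,q$ are distinct propositional letters. Define the families of states $A=\{\{w_1,w_2\},\{w_1,w_3\}\}^{\downarrow}$, $B=\{\{w_1,w_2\},\{w_2,w_3\}\}^{\downarrow}$ and $C=\{\{w_1,w_2\},\{w_3\}\}^{\downarrow}$ (these are, in $M_{pq}$, the propositions of $?p\to?q$, $?q\to?p$ and $(?p\to?q)\land(?q\to?p)$ respectively). Let $\varphi(a,b)$ be a formula of $\textsf{INQ}^-$ in which $p,q$ do not occur, and let $\varphi(?p,?q)$ be the result of substituting $?p$ for $a$ and $?q$ for $b$. Then $[\varphi(?p,?q)]_{M_{pq}}\neq A$, $\neq B$ and $\neq C$.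
   Context: $\textsf{INQ}^-$ is the propositional language built from countably many propositional letters using $\bot,\top$, unary $\neg,?$ and binary $\land$, $\vee$ (inquisitive disjunction), $\otimes$ (tensor). A model is $M=(W,V)$ with $V$ assigning to each world a set of letters. Support at $s\subseteq W$: $s\models p$ iff $p\in V(w)$ for all $w\in s$; $s\models\bot$ iff $s=\emptyset$; $s\models\top$ always; $s\models\psi\land\chi$ iff both; $s\models\psi\vee\chi$ iff $s\models\psi$ or $s\models\chi$; $s\models\psi\otimes\chi$ iff $s=t_1\cup t_2$ for some $t_1\models\psi$, $t_2\models\chi$; $s\models\psi\to\chi$ iff for all $t\subseteq s$, $t\models\psi$ implies $t\models\chi$; $s\models\neg\psi$ iff $s\models\psi\to\bot$; $s\models?\psi$ iff $s\models\psi$ or $s\models\neg\psi$. $[\varphi]_M=\{s\subseteq W: s\models\varphi\}$. For a family $S$ of sets, $S^{\downarrow}=\{t: t\subseteq s \text{ for some } s\in S\}$. *)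

theory Defs
  imports Main
begin

datatype 'v form =
    FBot | FTop | Atom 'v | FNeg "'v form" | FQue "'v form"
  | FConj "'v form" "'v form" | FDisj "'v form" "'v form" | FTens "'v form" "'v form"

fun atoms :: "'v form \<Rightarrow> 'v set" where
  "atoms FBot = {}"
| "atoms FTop = {}"
| "atoms (Atom p) = {p}"
| "atoms (FNeg f) = atoms f"
| "atoms (FQue f) = atoms f"
| "atoms (FConj f g) = atoms f \<union> atoms g"
| "atoms (FDisj f g) = atoms f \<union> atoms g"
| "atoms (FTens f g) = atoms f \<union> atoms g"

fun subst :: "('v \<Rightarrow> 'v form) \<Rightarrow> 'v form \<Rightarrow> 'v form" where
  "subst \<sigma> FBot = FBot"
| "subst \<sigma> FTop = FTop"
| "subst \<sigma> (Atom p) = \<sigma> p"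
| "subst \<sigma> (FNeg f) = FNeg (subst \<sigma> f)"
| "subst \<sigma> (FQue f) = FQue (subst \<sigma> f)"
| "subst \<sigma> (FConj f g) = FConj (subst \<sigma> f) (subst \<sigma> g)"
| "subst \<sigma> (FDisj f g) = FDisj (subst \<sigma> f) (subst \<sigma> g)"
| "subst \<sigma> (FTens f g) = FTens (subst \<sigma> f) (subst \<sigma> g)"

fun supp :: "('w \<Rightarrow> 'v set) \<Rightarrow> 'w set \<Rightarrow> 'v form \<Rightarrow> bool" where
  "supp V s FBot = (s = {})"
| "supp V s FTop = True"
| "supp V s (Atom p) = (\<forall>w\<in>s. p \<in> V w)"
| "supp V s (FNeg f) = (\<forall>t. t \<subseteq> s \<longrightarrow> supp V t f \<longrightarrow> t = {})"
| "supp V s (FQue f) = (supp V s f \<or> (\<forall>t. t \<subseteq> s \<longrightarrow> supp V t f \<longrightarrow> t = {}))"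
| "supp V s (FConj f g) = (supp V s f \<and> supp V s g)"
| "supp V s (FDisj f g) = (supp V s f \<or> supp V s g)"
| "supp V s (FTens f g) = (\<exists>t1 t2. s = t1 \<union> t2 \<and> supp V t1 f \<and> supp V t2 g)"

definition prop_of :: "'w set \<times> ('w \<Rightarrow> 'v set) \<Rightarrow> 'v form \<Rightarrow> 'w set set" where
  "prop_of M f = {s. s \<subseteq> fst M \<and> supp (snd M) s f}"

definition downset :: "'a set set \<Rightarrow> 'a set set" where
  "downset S = {t. \<exists>s\<in>S. t \<subseteq> s}"

text \<open>The model M_pq, with worlds w1,w2,w3 represented as 1,2,3.\<close>
definition Mpq :: "'v \<Rightarrow> 'v \<Rightarrow> nat set \<times> (nat \<Rightarrow> 'v set)" where
  "Mpq p q = ({1,2,3}, (\<lambda>w. if w = 1 then {p} else if w = 2 then {q} else {}))"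

definition famA :: "nat set set" where "famA = downset {{1,2},{1,3}}"
definition famB :: "nat set set" where "famB = downset {{1,2},{2,3}}"
definition famC :: "nat set set" where "famC = downset {{1,2},{3}}"

end

theory Submission
  imports Defs
begin

definition toS :: "bool \<Rightarrow> bool \<Rightarrow> bool \<Rightarrow> nat set" where
  "toS x y z = {n. (n = 1 \<and> x) \<or> (n = 2 \<and> y) \<or> (n = 3 \<and> z)}"

lemma toS_mem[simp]: "(1 \<in> toS x y z) = x" "(2 \<in> toS x y z) = y" "(3 \<in> toS x y z) = z"
  by (auto simp: toS_def)

lemma toS_mem1[simp]: "(Suc 0 \<in> toS x y z) = x" by (auto simp: toS_def)

lemma toS_sub: "toS x y z \<subseteq> {1,2,3}" by (auto simp: toS_def)

lemma toS_eq: "s \<subseteq> {1,2,3::nat} \<Longrightarrow> s = toS (1 \<in> s) (2 \<in> s) (3 \<in> s)"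
  by (auto simp: toS_def)

definition Sem :: "(nat \<Rightarrow> 'v set) \<Rightarrow> 'v form \<Rightarrow> (bool \<Rightarrow> bool \<Rightarrow> bool \<Rightarrow> bool) \<Rightarrow> bool" where
  "Sem V f G = (\<forall>s. s \<subseteq> {1,2,3} \<longrightarrow> (supp V s f \<longleftrightarrow> G (1 \<in> s) (2 \<in> s) (3 \<in> s)))"

definition negF :: "(bool \<Rightarrow> bool \<Rightarrow> bool \<Rightarrow> bool) \<Rightarrow> bool \<Rightarrow> bool \<Rightarrow> bool \<Rightarrow> bool" where
  "negF G x y z = (\<forall>x' y' z'. (x' \<longrightarrow> x) \<and> (y' \<longrightarrow> y) \<and> (z' \<longrightarrow> z) \<longrightarrow> G x' y' z' \<longrightarrow> \<not>x' \<and> \<not>y' \<and> \<not>z')"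

definition tensF :: "(bool \<Rightarrow> bool \<Rightarrow> bool \<Rightarrow> bool) \<Rightarrow> (bool \<Rightarrow> bool \<Rightarrow> bool \<Rightarrow> bool) \<Rightarrow> bool \<Rightarrow> bool \<Rightarrow> bool \<Rightarrow> bool" where
  "tensF G H x y z = (\<exists>x1 y1 z1 x2 y2 z2. x = (x1 \<or> x2) \<and> y = (y1 \<or> y2) \<and> z = (z1 \<or> z2)
      \<and> G x1 y1 z1 \<and> H x2 y2 z2)"

lemma sub_bits: "t \<subseteq> {1,2,3::nat} \<Longrightarrow> s \<subseteq> {1,2,3} \<Longrightarrow>
   t \<subseteq> s \<longleftrightarrow> ((1 \<in> t \<longrightarrow> 1 \<in> s) \<and> (2 \<in> t \<longrightarrow> 2 \<in> s) \<and> (3 \<in> t \<longrightarrow> 3 \<in> s))"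
  by auto

lemma Sem_neg: assumes "Sem V f G" shows "Sem V (FNeg f) (negF G)"
  unfolding Sem_def
proof (intro allI impI)
  fix s :: "nat set" assume s: "s \<subseteq> {1,2,3}"
  show "supp V s (FNeg f) = negF G (1 \<in> s) (2 \<in> s) (3 \<in> s)"
  proof
    assume h: "supp V s (FNeg f)"
    show "negF G (1 \<in> s) (2 \<in> s) (3 \<in> s)"
      unfolding negF_def
    proof (intro allI impI)
      fix x' y' z' assume a: "(x' \<longrightarrow> 1 \<in> s) \<and> (y' \<longrightarrow> 2 \<in> s) \<and> (z' \<longrightarrow> 3 \<in> s)" "G x' y' z'"
      have ts: "toS x' y' z' \<subseteq> s" using a(1) by (auto simp: toS_def)
      have "supp V (toS x' y' z') f" using assms a(2) toS_sub unfolding Sem_def by simp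
      then have "toS x' y' z' = {}" using h ts by simp
      then show "\<not>x' \<and> \<not>y' \<and> \<not>z'" by (metis empty_iff toS_mem)
    qed
  next
    assume h: "negF G (1 \<in> s) (2 \<in> s) (3 \<in> s)"
    show "supp V s (FNeg f)"
    proof (simp, intro allI impI)
      fix t assume t: "t \<subseteq> s" "supp V t f"
      have tw: "t \<subseteq> {1,2,3}" using t s by blast
      have "G (1 \<in> t) (2 \<in> t) (3 \<in> t)" using assms t tw unfolding Sem_def by simp
      then have "1 \<notin> t \<and> 2 \<notin> t \<and> 3 \<notin> t" using h t(1) unfolding negF_def by blast
      then show "t = {}" using tw by blast
    qed
  qed
qed

lemma Sem_que: assumes "Sem V f G" shows "Sem V (FQue f) (\<lambda>x y z. G x y z \<or> negF G x y z)"
  using assms Sem_neg[OF assms] unfolding Sem_def by simp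

lemma Sem_conj: "Sem V f G \<Longrightarrow> Sem V g H \<Longrightarrow> Sem V (FConj f g) (\<lambda>x y z. G x y z \<and> H x y z)"
  unfolding Sem_def by simp

lemma Sem_disj: "Sem V f G \<Longrightarrow> Sem V g H \<Longrightarrow> Sem V (FDisj f g) (\<lambda>x y z. G x y z \<or> H x y z)"
  unfolding Sem_def by simp

lemma Sem_tens: assumes "Sem V f G" "Sem V g H" shows "Sem V (FTens f g) (tensF G H)"
  unfolding Sem_def
proof (intro allI impI)
  fix s :: "nat set" assume s: "s \<subseteq> {1,2,3}"
  show "supp V s (FTens f g) = tensF G H (1 \<in> s) (2 \<in> s) (3 \<in> s)"
  proof
    assume "supp V s (FTens f g)"
    then obtain t1 t2 where t: "s = t1 \<union> t2" "supp V t1 f" "supp V t2 g" by auto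
    have "t1 \<subseteq> {1,2,3}" "t2 \<subseteq> {1,2,3}" using t s by auto
    then have "G (1 \<in> t1) (2 \<in> t1) (3 \<in> t1)" "H (1 \<in> t2) (2 \<in> t2) (3 \<in> t2)"
      using assms t unfolding Sem_def by auto
    then show "tensF G H (1 \<in> s) (2 \<in> s) (3 \<in> s)" unfolding tensF_def t(1)
      by (intro exI[of _ "1 \<in> t1"] exI[of _ "2 \<in> t1"] exI[of _ "3 \<in> t1"]
          exI[of _ "1 \<in> t2"] exI[of _ "2 \<in> t2"] exI[of _ "3 \<in> t2"]) simp
  next
    assume "tensF G H (1 \<in> s) (2 \<in> s) (3 \<in> s)"
    then obtain x1 y1 z1 x2 y2 z2 where h: "(1 \<in> s) = (x1 \<or> x2)" "(2 \<in> s) = (y1 \<or> y2)"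
      "(3 \<in> s) = (z1 \<or> z2)" "G x1 y1 z1" "H x2 y2 z2" unfolding tensF_def
      apply -
      apply (elim exE conjE)
      apply (rule that)
      apply assumption+
      done
    have "s = toS (1 \<in> s) (2 \<in> s) (3 \<in> s)" by (rule toS_eq[OF s])
    also have "\<dots> = toS (x1 \<or> x2) (y1 \<or> y2) (z1 \<or> z2)" using h(1-3) by simp
    also have "\<dots> = toS x1 y1 z1 \<union> toS x2 y2 z2" by (auto simp: toS_def)
    finally have "s = toS x1 y1 z1 \<union> toS x2 y2 z2" .
    moreover have "supp V (toS x1 y1 z1) f" "supp V (toS x2 y2 z2) g"
      using assms h(4,5) toS_sub unfolding Sem_def by simp_all
    ultimately show "supp V s (FTens f g)" unfolding supp.simps by blast
  qed
qed

definition famL :: "(bool \<Rightarrow> bool \<Rightarrow> bool \<Rightarrow> bool) list" where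
  "famL = [\<lambda>x y z. \<not>x \<and> \<not>y \<and> \<not>z, \<lambda>x y z. True,
     \<lambda>x y z. (\<not>y \<and> \<not>z) \<or> \<not>x, \<lambda>x y z. (\<not>x \<and> \<not>z) \<or> \<not>y,
     \<lambda>x y z. \<not>(x \<and> y) \<and> \<not>(x \<and> z) \<and> \<not>(y \<and> z), \<lambda>x y z. \<not>(x \<and> y \<and> z),
     \<lambda>x y z. \<not>(x \<and> y)]"

definition "negT = [1, 0, 0, 0, 0, 0, 0::nat]"
definition "queT = [1, 1, 2, 3, 4, 5, 6::nat]"
definition "conjT = [[0, 0, 0, 0, 0, 0, 0], [0, 1, 2, 3, 4, 5, 6], [0, 2, 2, 4, 4, 2, 2], [0, 3, 4, 3, 4, 3, 3], [0, 4, 4, 4, 4, 4, 4], [0, 5, 2, 3, 4, 5, 6], [0, 6, 2, 3, 4, 6, 6::nat]]"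
definition "disjT = [[0, 1, 2, 3, 4, 5, 6], [1, 1, 1, 1, 1, 1, 1], [2, 1, 2, 6, 2, 5, 6], [3, 1, 6, 3, 3, 5, 6], [4, 1, 2, 3, 4, 5, 6], [5, 1, 5, 5, 5, 5, 5], [6, 1, 6, 6, 6, 5, 6::nat]]"
definition "tensT = [[0, 1, 2, 3, 4, 5, 6], [1, 1, 1, 1, 1, 1, 1], [2, 1, 1, 1, 1, 1, 1], [3, 1, 1, 1, 1, 1, 1], [4, 1, 1, 1, 5, 1, 1], [5, 1, 1, 1, 1, 1, 1], [6, 1, 1, 1, 1, 1, 1::nat]]"

lemma neg_tab: "\<forall>c\<in>{0,1,2,3,4,5,6::nat}. negT ! c \<in> {0,1,2,3,4,5,6::nat} \<and> negF (famL ! c) = famL ! (negT ! c)"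
  by (simp add: negT_def famL_def negF_def fun_eq_iff all_bool_eq ex_bool_eq)

lemma que_tab: "\<forall>c\<in>{0,1,2,3,4,5,6::nat}. queT ! c \<in> {0,1,2,3,4,5,6::nat} \<and> (\<lambda>x y z. (famL ! c) x y z \<or> negF (famL ! c) x y z) = famL ! (queT ! c)"
  by (simp add: queT_def famL_def negF_def fun_eq_iff all_bool_eq ex_bool_eq)


lemma conj_tab: "\<forall>c\<in>{0,1,2,3,4,5,6::nat}. \<forall>d\<in>{0,1,2,3,4,5,6::nat}. conjT ! c ! d \<in> {0,1,2,3,4,5,6::nat} \<and> (\<lambda>x y z. (famL ! c) x y z \<and> (famL ! d) x y z) = famL ! (conjT ! c ! d)"
  by (simp add: conjT_def famL_def fun_eq_iff all_bool_eq)

lemma disj_tab: "\<forall>c\<in>{0,1,2,3,4,5,6::nat}. \<forall>d\<in>{0,1,2,3,4,5,6::nat}. disjT ! c ! d \<in> {0,1,2,3,4,5,6::nat} \<and> (\<lambda>x y z. (famL ! c) x y z \<or> (famL ! d) x y z) = famL ! (disjT ! c ! d)"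
  by (simp add: disjT_def famL_def fun_eq_iff all_bool_eq)

lemma tens_tab: "\<forall>c\<in>{0,1,2,3,4,5,6::nat}. \<forall>d\<in>{0,1,2,3,4,5,6::nat}. tensT ! c ! d \<in> {0,1,2,3,4,5,6::nat} \<and> tensF (famL ! c) (famL ! d) = famL ! (tensT ! c ! d)"
  by (simp add: tensT_def famL_def tensF_def fun_eq_iff all_bool_eq ex_bool_eq)

definition Inv :: "(nat \<Rightarrow> 'v set) \<Rightarrow> 'v form \<Rightarrow> bool" where
  "Inv V f = (\<exists>c\<in>{0,1,2,3,4,5,6::nat}. Sem V f (famL ! c))"

lemma Inv_neg: assumes "Inv V f" shows "Inv V (FNeg f)"
proof -
  obtain c where c: "c \<in> {0,1,2,3,4,5,6::nat}" "Sem V f (famL ! c)" using assms unfolding Inv_def by blast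
  have t: "negT!c \<in> {0,1,2,3,4,5,6::nat} \<and> negF (famL ! c) = famL ! (negT ! c)"
    using neg_tab c(1) by (rule bspec)
  have "Sem V (FNeg f) (negF (famL ! c))" by (rule Sem_neg[OF c(2)])
  then show ?thesis unfolding Inv_def using t by (intro bexI[where x="negT ! c"]) simp_all
qed

lemma Inv_que: assumes "Inv V f" shows "Inv V (FQue f)"
proof -
  obtain c where c: "c \<in> {0,1,2,3,4,5,6::nat}" "Sem V f (famL ! c)" using assms unfolding Inv_def by blast
  have t: "queT!c \<in> {0,1,2,3,4,5,6::nat} \<and> (\<lambda>x y z. (famL ! c) x y z \<or> negF (famL ! c) x y z) = famL ! (queT ! c)"
    using que_tab c(1) by (rule bspec)
  have "Sem V (FQue f) ((\<lambda>x y z. (famL ! c) x y z \<or> negF (famL ! c) x y z))" by (rule Sem_que[OF c(2)])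
  then show ?thesis unfolding Inv_def using t by (intro bexI[where x="queT ! c"]) simp_all
qed

lemma Inv_conj: assumes "Inv V f" "Inv V g" shows "Inv V (FConj f g)"
proof -
  obtain c where c: "c \<in> {0,1,2,3,4,5,6::nat}" "Sem V f (famL ! c)" using assms(1) unfolding Inv_def by blast
  obtain d where d: "d \<in> {0,1,2,3,4,5,6::nat}" "Sem V g (famL ! d)" using assms(2) unfolding Inv_def by blast
  have t: "conjT!c!d \<in> {0,1,2,3,4,5,6::nat} \<and> (\<lambda>x y z. (famL ! c) x y z \<and> (famL ! d) x y z) = famL ! (conjT ! c ! d)"
    using bspec[OF bspec[OF conj_tab c(1)] d(1)] .
  have "Sem V (FConj f g) ((\<lambda>x y z. (famL ! c) x y z \<and> (famL ! d) x y z))" by (rule Sem_conj[OF c(2) d(2)])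
  then show ?thesis unfolding Inv_def using t by (intro bexI[where x="conjT ! c ! d"]) simp_all
qed

lemma Inv_disj: assumes "Inv V f" "Inv V g" shows "Inv V (FDisj f g)"
proof -
  obtain c where c: "c \<in> {0,1,2,3,4,5,6::nat}" "Sem V f (famL ! c)" using assms(1) unfolding Inv_def by blast
  obtain d where d: "d \<in> {0,1,2,3,4,5,6::nat}" "Sem V g (famL ! d)" using assms(2) unfolding Inv_def by blast
  have t: "disjT!c!d \<in> {0,1,2,3,4,5,6::nat} \<and> (\<lambda>x y z. (famL ! c) x y z \<or> (famL ! d) x y z) = famL ! (disjT ! c ! d)"
    using bspec[OF bspec[OF disj_tab c(1)] d(1)] .
  have "Sem V (FDisj f g) ((\<lambda>x y z. (famL ! c) x y z \<or> (famL ! d) x y z))" by (rule Sem_disj[OF c(2) d(2)])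
  then show ?thesis unfolding Inv_def using t by (intro bexI[where x="disjT ! c ! d"]) simp_all
qed

lemma Inv_tens: assumes "Inv V f" "Inv V g" shows "Inv V (FTens f g)"
proof -
  obtain c where c: "c \<in> {0,1,2,3,4,5,6::nat}" "Sem V f (famL ! c)" using assms(1) unfolding Inv_def by blast
  obtain d where d: "d \<in> {0,1,2,3,4,5,6::nat}" "Sem V g (famL ! d)" using assms(2) unfolding Inv_def by blast
  have t: "tensT!c!d \<in> {0,1,2,3,4,5,6::nat} \<and> tensF (famL ! c) (famL ! d) = famL ! (tensT ! c ! d)"
    using bspec[OF bspec[OF tens_tab c(1)] d(1)] .
  have "Sem V (FTens f g) (tensF (famL ! c) (famL ! d))" by (rule Sem_tens[OF c(2) d(2)])
  then show ?thesis unfolding Inv_def using t by (intro bexI[where x="tensT ! c ! d"]) simp_all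
qed

lemma Inv_bot: "Inv V FBot"
  unfolding Inv_def Sem_def
  by (rule bexI[where x=0]) (auto simp: famL_def)

lemma Inv_top: "Inv V FTop"
  unfolding Inv_def Sem_def
  by (rule bexI[where x=1]) (auto simp: famL_def)

lemma Inv_atom_other: "x \<noteq> p \<Longrightarrow> x \<noteq> q \<Longrightarrow> Inv (snd (Mpq p q)) (Atom x)"
  unfolding Inv_def Sem_def
  by (rule bexI[where x=0]) (auto simp: famL_def Mpq_def)

lemma Sem_p: "p \<noteq> q \<Longrightarrow> Sem (snd (Mpq p q)) (Atom p) (\<lambda>x y z. \<not>y \<and> \<not>z)"
  unfolding Sem_def by (auto simp: Mpq_def)

lemma Sem_q: "p \<noteq> q \<Longrightarrow> Sem (snd (Mpq p q)) (Atom q) (\<lambda>x y z. \<not>x \<and> \<not>z)"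
  unfolding Sem_def by (auto simp: Mpq_def)

lemma Inv_qp: assumes "p \<noteq> q" shows "Inv (snd (Mpq p q)) (FQue (Atom p))"
proof -
  have "(\<lambda>x y z. (\<not>y \<and> \<not>z) \<or> negF (\<lambda>x y z. \<not>y \<and> \<not>z) x y z) = famL ! 2"
    by (simp add: famL_def negF_def fun_eq_iff all_bool_eq)
  then show ?thesis unfolding Inv_def using Sem_que[OF Sem_p[OF assms]]
    by (intro bexI[where x=2]) auto
qed

lemma Inv_qq: assumes "p \<noteq> q" shows "Inv (snd (Mpq p q)) (FQue (Atom q))"
proof -
  have "(\<lambda>x y z. (\<not>x \<and> \<not>z) \<or> negF (\<lambda>x y z. \<not>x \<and> \<not>z) x y z) = famL ! 3"
    by (simp add: famL_def negF_def fun_eq_iff all_bool_eq)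
  then show ?thesis unfolding Inv_def using Sem_que[OF Sem_q[OF assms]]
    by (intro bexI[where x=3]) auto
qed

lemma Inv_subst:
  assumes "p \<noteq> q" "p \<notin> atoms \<phi>" "q \<notin> atoms \<phi>"
  shows "Inv (snd (Mpq p q)) (subst (\<lambda>x. if x = a then FQue (Atom p) else if x = b then FQue (Atom q) else Atom x) \<phi>)"
  using assms(2,3)
proof (induction \<phi>)
  case (Atom x)
  then show ?case using Inv_qp[OF assms(1)] Inv_qq[OF assms(1)] Inv_atom_other[of x p q] by auto
qed (auto intro: Inv_bot Inv_top Inv_neg Inv_que Inv_conj Inv_disj Inv_tens)

lemma toS_in_down: "toS x y z \<in> downset S \<longleftrightarrow> (\<exists>T\<in>S. (x \<longrightarrow> 1 \<in> T) \<and> (y \<longrightarrow> 2 \<in> T) \<and> (z \<longrightarrow> 3 \<in> T))"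
  unfolding downset_def by (auto simp: toS_def)

lemma prop_bits: assumes "Sem V f G"
  shows "toS x y z \<in> prop_of ({1,2,3}, V) f \<longleftrightarrow> G x y z"
  using assms toS_sub unfolding Sem_def prop_of_def by auto

theorem lemma2:
  fixes p q a b :: nat and \<phi> :: "nat form"
  assumes "p \<noteq> q" and "a \<noteq> b"
    and "p \<notin> atoms \<phi>" and "q \<notin> atoms \<phi>"
  shows "let \<psi> = subst (\<lambda>x. if x = a then FQue (Atom p) else if x = b then FQue (Atom q) else Atom x) \<phi>
         in prop_of (Mpq p q) \<psi> \<noteq> famA \<and> prop_of (Mpq p q) \<psi> \<noteq> famB \<and> prop_of (Mpq p q) \<psi> \<noteq> famC"
proof -
  define \<psi> where "\<psi> = subst (\<lambda>x. if x = a then FQue (Atom p) else if x = b then FQue (Atom q) else Atom x) \<phi>"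
  obtain c where c: "c \<in> {0,1,2,3,4,5,6::nat}" "Sem (snd (Mpq p q)) \<psi> (famL ! c)"
    using Inv_subst[OF assms(1,3,4)] unfolding Inv_def \<psi>_def by blast
  have M: "Mpq p q = ({1,2,3}, snd (Mpq p q))" by (simp add: Mpq_def)
  have pb: "\<And>x y z. toS x y z \<in> prop_of (Mpq p q) \<psi> \<longleftrightarrow> (famL ! c) x y z"
    using prop_bits[OF c(2)] M by metis
  have nA: "\<not> (\<forall>x y z. (famL ! c) x y z = (\<not>(y \<and> z)))"
    using c(1) by (auto simp: famL_def all_bool_eq)
  have nB: "\<not> (\<forall>x y z. (famL ! c) x y z = (\<not>(x \<and> z)))"
    using c(1) by (auto simp: famL_def all_bool_eq)
  have nC: "\<not> (\<forall>x y z. (famL ! c) x y z = (\<not>(z \<and> (x \<or> y))))"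
    using c(1) by (auto simp: famL_def all_bool_eq)
  have "prop_of (Mpq p q) \<psi> \<noteq> famA"
  proof
    assume h: "prop_of (Mpq p q) \<psi> = famA"
    have "\<forall>x y z. (famL ! c) x y z = (\<not>(y \<and> z))"
      using pb[unfolded h famA_def toS_in_down] by auto
    then show False using nA by blast
  qed
  moreover have "prop_of (Mpq p q) \<psi> \<noteq> famB"
  proof
    assume h: "prop_of (Mpq p q) \<psi> = famB"
    have "\<forall>x y z. (famL ! c) x y z = (\<not>(x \<and> z))"
      using pb[unfolded h famB_def toS_in_down] by auto
    then show False using nB by blast
  qed
  moreover have "prop_of (Mpq p q) \<psi> \<noteq> famC"
  proof
    assume h: "prop_of (Mpq p q) \<psi> = famC"
    have "\<forall>x y z. (famL ! c) x y z = (\<not>(z \<and> (x \<or> y)))"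
      using pb[unfolded h famC_def toS_in_down] by auto
    then show False using nC by blast
  qed
  ultimately show ?thesis unfolding \<psi>_def Let_def by blast
qed

end
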